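(* For every $V_{\sf P}\ge \tfrac13$, $$\lim_{\delta\to1}\lim_{p\to0}\frac{{\sf Util}({\sf PEAR})-{\sf Util}({\sf APP})}{{\sf Util}({\sf APP})}\ \ge\ \frac{1}{V_{\sf P}+1}.$$
   Context: Model. Time $t=0,1,2,\dots$, discount factor $\delta\in[0,1)$. Two item types, popular ${\sf P}$ and niche ${\sf N}$, infinitely many items each; at each time $t$ the platform recommends a set $\pi_t$ of two fresh items of chosen types. Utility of item $i$: $u_i=V_{\tau(i)}+\epsilon_i$; outside option: $u_\emptyset=\epsilon_\emptyset$; all noises i.i.d. Gumbel with scale $1$ and mean $0$. User chooses $c_t=\arg\max_{j\in\pi_t\cup\{\emptyset\}}u_j$. $V_{\sf P}$ is a known constant; $V_{\sf N}$ is drawn once, fixed over time, independent of noise, with $\mathbb P(V_{\sf N}=(1-p)/p)=p$, $\mathbb P(V_{\sf N}=-1)=1-p$, $p\in(0,1)$. ${\sf Util}(\pi)=\sum_{t\ge0}\delta^t\mathbb E[\max_{j\in\pi_t\cup\{\emptyset\}}u_j]$ (expectation also over $V_{\sf N}$). ${\sf APP}$ recommends two popular items at every time. Policy ${\sf PEAR}$: let $\rho_1=\frac{e^{(1-p)/p}}{1+e^{V_{\sf P}}+e^{(1-p)/p}}$, $\rho_2=\frac{e^{-1}}{1+e^{V_{\sf P}}+e^{-1}}$. Maintain counters $S,F$ (initially $0$) and $p_0=p$. At each time $t$: if $p_t\ge p$, recommend one popular and one niche item; if the niche item is chosen increment $S$, otherwise increment $F$. If $p_t<p$, recommend two popular items.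 Then set $p_{t+1}=\left(1+\frac{1-p}{p}\cdot\frac{\rho_2^S(1-\rho_2)^F}{\rho_1^S(1-\rho_1)^F}\right)^{-1}$. *)

theory Defs
  imports "HOL-Probability.Probability"
begin

text \<open>Expected value of the maximum of mean-zero, scale-1 Gumbel-perturbed utilities
  over a recommended set with mean values vs plus the outside option (mean 0):
  E[max] = ln (1 + sum of exp V_j) (standard Gumbel/logit fact).\<close>
definition gumbel_emax :: "real list \<Rightarrow> real" where
  "gumbel_emax vs = ln (1 + sum_list (map exp vs))"

text \<open>Probability that the niche item (mean value v) is chosen when the set
  {popular, niche} is recommended (multinomial logit choice probability).\<close>
definition rho :: "real \<Rightarrow> real \<Rightarrow> real" where
  "rho VP v = exp v / (1 + exp VP + exp v)"

definition vgood :: "real \<Rightarrow> real" where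
  "vgood p = (1 - p) / p"

definition niche_pmf :: "real \<Rightarrow> real pmf" where
  "niche_pmf p = map_pmf (\<lambda>b. if b then vgood p else -1) (bernoulli_pmf p)"

text \<open>PEAR's posterior after S successes and F failures (p_0 = p for S = F = 0).\<close>
definition post :: "real \<Rightarrow> real \<Rightarrow> nat \<Rightarrow> nat \<Rightarrow> real" where
  "post VP p S F = inverse (1 + (1 - p) / p *
      ((rho VP (-1)) ^ S * (1 - rho VP (-1)) ^ F) /
      ((rho VP (vgood p)) ^ S * (1 - rho VP (vgood p)) ^ F))"

definition pear_explore :: "real \<Rightarrow> real \<Rightarrow> nat \<Rightarrow> nat \<Rightarrow> bool" where
  "pear_explore VP p S F \<longleftrightarrow> post VP p S F \<ge> p"

primrec pear_state :: "real \<Rightarrow> real \<Rightarrow> real \<Rightarrow> nat \<Rightarrow> (nat \<times> nat) pmf" where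
  "pear_state VP p v 0 = return_pmf (0, 0)"
| "pear_state VP p v (Suc t) =
     bind_pmf (pear_state VP p v t)
       (\<lambda>(S, F). if pear_explore VP p S F
          then map_pmf (\<lambda>b. if b then (Suc S, F) else (S, Suc F)) (bernoulli_pmf (rho VP v))
          else return_pmf (S, F))"

definition pear_reward :: "real \<Rightarrow> real \<Rightarrow> real \<Rightarrow> nat \<times> nat \<Rightarrow> real" where
  "pear_reward VP p v sf = (if pear_explore VP p (fst sf) (snd sf)
      then gumbel_emax [VP, v] else gumbel_emax [VP, VP])"

definition Util_PEAR :: "real \<Rightarrow> real \<Rightarrow> real \<Rightarrow> real" where
  "Util_PEAR VP p \<delta> = (\<Sum>t. \<delta> ^ t *
      measure_pmf.expectation
        (bind_pmf (niche_pmf p) (\<lambda>v. map_pmf (\<lambda>sf. (v, sf)) (pear_state VP p v t)))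
        (\<lambda>(v, sf). pear_reward VP p v sf))"

definition Util_APP :: "real \<Rightarrow> real \<Rightarrow> real \<Rightarrow> real" where
  "Util_APP VP p \<delta> = (\<Sum>t. \<delta> ^ t *
      measure_pmf.expectation (niche_pmf p) (\<lambda>v. gumbel_emax [VP, VP]))"

end

theory Submission
  imports Defs "HOL-Real_Asymp.Real_Asymp"
begin


lemma rho_pos: "0 < rho VP v" unfolding rho_def by (simp add: add_pos_pos)
lemma rho_lt1: "rho VP v < 1" unfolding rho_def by (simp add: add_pos_pos)
lemma rho_mono: "v \<le> w \<Longrightarrow> rho VP v \<le> rho VP w"
proof -
  assume "v \<le> w"
  then have "exp v \<le> exp w" by simp
  then have "exp v * (1 + exp VP) \<le> exp w * (1 + exp VP)"
    by (intro mult_right_mono) auto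
  then have "exp v * (1 + exp VP + exp w) \<le> exp w * (1 + exp VP + exp v)"
    by (simp add: algebra_simps)
  then show ?thesis unfolding rho_def by (simp add: divide_simps add_pos_pos)
qed

lemma supp: "set_pmf (pear_state VP p v t) \<subseteq> {sf. fst sf + snd sf \<le> t}"
proof (induction t)
  case 0 then show ?case by simp
next
  case (Suc t)
  then show ?case by (force split: if_splits prod.splits)
qed

lemma fin_supp: "finite (set_pmf (pear_state VP p v t))"
proof -
  have "{sf::nat\<times>nat. fst sf + snd sf \<le> t} \<subseteq> {..t} \<times> {..t}" by auto
  then show ?thesis using supp[of VP p v t] by (meson finite_SigmaI finite_atMost finite_subset)
qed

lemma explore_iff:
  assumes "0 < p" "p < 1"
  shows "pear_explore VP p S F \<longleftrightarrow>
    rho VP (-1) ^ S * (1 - rho VP (-1)) ^ F \<le> rho VP (vgood p) ^ S * (1 - rho VP (vgood p)) ^ F"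
proof -
  define X where "X = rho VP (-1) ^ S * (1 - rho VP (-1)) ^ F"
  define Y where "Y = rho VP (vgood p) ^ S * (1 - rho VP (vgood p)) ^ F"
  have X: "X > 0" unfolding X_def using rho_pos rho_lt1 by simp
  have Y: "Y > 0" unfolding Y_def using rho_pos rho_lt1 by simp
  have c: "(1-p)/p > 0" using assms by simp
  have "post VP p S F = 1 / (1 + (1-p)/p * X / Y)" unfolding post_def X_def Y_def
    by (simp add: inverse_eq_divide)
  moreover have "1 / (1 + (1-p)/p * X / Y) \<ge> p \<longleftrightarrow> X \<le> Y"
  proof -
    have "(1-p)/p * X / Y > 0" using X Y c assms by (intro divide_pos_pos mult_pos_pos) auto
    then have pos: "1 + (1-p)/p * X / Y > 0" by linarith
    have "1 / (1 + (1-p)/p * X / Y) \<ge> p \<longleftrightarrow> p * (1 + (1-p)/p * X / Y) \<le> 1"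
      using pos by (simp add: divide_simps mult.commute)
    also have "\<dots> \<longleftrightarrow> p + (1-p) * X / Y \<le> 1"
    proof -
      have "p * (1 + (1-p)/p * X / Y) = p + (1-p) * X / Y" using assms Y by (simp add: field_simps)
      then show ?thesis by simp
    qed
    also have "\<dots> \<longleftrightarrow> (1-p) * (X / Y) \<le> (1-p) * 1" by auto
    also have "\<dots> \<longleftrightarrow> X / Y \<le> 1" using assms by (simp only: mult_le_cancel_left_pos)
    also have "\<dots> \<longleftrightarrow> X \<le> Y" using Y by simp
    finally show ?thesis .
  qed
  ultimately show ?thesis unfolding pear_explore_def X_def Y_def by simp
qed

lemma explore_diag:
  assumes "0 < p" "p < 1"
  shows "pear_explore VP p S 0"
proof -
  have "(1-p)/p \<ge> 0" using assms by simp
  then have "vgood p \<ge> -1" unfolding vgood_def by linarith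
  then have "rho VP (-1) \<le> rho VP (vgood p)" by (rule rho_mono)
  then show ?thesis using explore_iff[OF assms] rho_pos
    by (simp add: power_mono less_imp_le)
qed



lemma step_pmf:
  assumes "S + F \<le> t" "0 \<le> r" "r \<le> 1"
  shows "pmf (if pear_explore VP p S F then map_pmf (\<lambda>b. if b then (Suc S, F) else (S, Suc F)) (bernoulli_pmf r)
      else return_pmf (S, F)) (Suc t, 0) = (if S = t \<and> F = 0 \<and> pear_explore VP p S F then r else 0)"
proof (cases "pear_explore VP p S F")
  case True
  have "(\<lambda>b. if b then (Suc S, F) else (S, Suc F)) -` {(Suc t, 0)} = (if S = t \<and> F = 0 then {True} else {})"
    using assms(1) by (auto split: if_splits)
  then show ?thesis using True assms by (auto simp: pmf_map measure_pmf_single)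
next
  case False
  then show ?thesis using assms by auto
qed

lemma pmf_diag:
  assumes "0 < p" "p < 1"
  shows "pmf (pear_state VP p v t) (t, 0) = rho VP v ^ t"
proof (induction t)
  case 0 then show ?case by simp
next
  case (Suc t)
  have r: "0 \<le> rho VP v" "rho VP v \<le> 1" using rho_pos[of VP v] rho_lt1[of VP v] by auto
  have "pmf (pear_state VP p v (Suc t)) (Suc t, 0) =
     (\<integral>sf. (case sf of (S, F) \<Rightarrow> pmf (if pear_explore VP p S F then map_pmf (\<lambda>b. if b then (Suc S, F) else (S, Suc F)) (bernoulli_pmf (rho VP v))
      else return_pmf (S, F)) (Suc t, 0)) \<partial>measure_pmf (pear_state VP p v t))"
    by (simp add: pmf_bind case_prod_unfold)
  also have "\<dots> = (\<integral>sf. (if sf = (t, 0) then rho VP v else 0) \<partial>measure_pmf (pear_state VP p v t))"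
  proof (rule integral_cong_AE)
    show "AE x in measure_pmf (pear_state VP p v t). (case x of (S, F) \<Rightarrow> pmf (if pear_explore VP p S F then map_pmf (\<lambda>b. if b then (Suc S, F) else (S, Suc F)) (bernoulli_pmf (rho VP v))
      else return_pmf (S, F)) (Suc t, 0)) = (if x = (t, 0) then rho VP v else 0)"
      unfolding AE_measure_pmf_iff
    proof
      fix x assume "x \<in> set_pmf (pear_state VP p v t)"
      obtain S F where xSF: "x = (S, F)" by (cases x)
      have "fst x + snd x \<le> t" using supp \<open>x \<in> _\<close> by blast
      then have SF: "S + F \<le> t" using xSF by simp
      show "(case x of (S, F) \<Rightarrow> pmf (if pear_explore VP p S F then map_pmf (\<lambda>b. if b then (Suc S, F) else (S, Suc F)) (bernoulli_pmf (rho VP v))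
      else return_pmf (S, F)) (Suc t, 0)) = (if x = (t, 0) then rho VP v else 0)"
        using step_pmf[OF SF r, of VP p] explore_diag[OF assms, of VP t]
        by (auto simp: xSF)
    qed
  qed auto
  also have "\<dots> = rho VP v * pmf (pear_state VP p v t) (t, 0)"
    by (subst integral_measure_pmf_real[of "{(t,0)}"]) (auto split: if_splits)
  finally show ?case using Suc by simp
qed

lemma supp_diag:
  assumes "0 < p" "p < 1"
  shows "(S, 0) \<in> set_pmf (pear_state VP p v t) \<Longrightarrow> S = t"
proof (induction t arbitrary: S)
  case 0 then show ?case by simp
next
  case (Suc t)
  then show ?case using explore_diag[OF assms, of VP]
    by (auto split: if_splits prod.splits)
qed

definition Pex where
  "Pex VP p v t = measure_pmf.prob (pear_state VP p v t) {sf. pear_explore VP p (fst sf) (snd sf)}"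

lemma Pex_le1: "Pex VP p v t \<le> 1" unfolding Pex_def by simp
lemma Pex_ge0: "Pex VP p v t \<ge> 0" unfolding Pex_def by simp

lemma Pex_ge:
  assumes "0 < p" "p < 1"
  shows "rho VP v ^ t \<le> Pex VP p v t"
proof -
  have "rho VP v ^ t = measure_pmf.prob (pear_state VP p v t) {(t,0)}"
    using pmf_diag[OF assms] by (simp add: measure_pmf_single)
  also have "\<dots> \<le> Pex VP p v t" unfolding Pex_def
    using explore_diag[OF assms] by (intro measure_pmf.finite_measure_mono) auto
  finally show ?thesis .
qed

lemma Pex_eq:
  assumes "0 < p" "p < 1" and no: "\<And>S F. S + F \<le> t \<Longrightarrow> F \<ge> 1 \<Longrightarrow> \<not> pear_explore VP p S F"
  shows "Pex VP p v t = rho VP v ^ t"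
proof -
  have "Pex VP p v t = measure_pmf.prob (pear_state VP p v t)
      ({sf. pear_explore VP p (fst sf) (snd sf)} \<inter> set_pmf (pear_state VP p v t))"
    unfolding Pex_def by (simp add: measure_Int_set_pmf)
  also have "\<dots> \<le> measure_pmf.prob (pear_state VP p v t) {(t,0)}"
  proof (intro measure_pmf.finite_measure_mono)
    show "{sf. pear_explore VP p (fst sf) (snd sf)} \<inter> set_pmf (pear_state VP p v t) \<subseteq> {(t, 0)}"
    proof
      fix x assume x: "x \<in> {sf. pear_explore VP p (fst sf) (snd sf)} \<inter> set_pmf (pear_state VP p v t)"
      then have "fst x + snd x \<le> t" using supp by blast
      with x no have "snd x = 0" by (cases "snd x") auto
      show "x \<in> {(t,0)}" using supp_diag[OF assms(1,2), of "fst x" VP v t] x \<open>snd x = 0\<close>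
        by (cases x) auto
    qed
  qed auto
  also have "\<dots> = rho VP v ^ t" using pmf_diag[OF assms(1,2)] by (simp add: measure_pmf_single)
  finally show ?thesis using Pex_ge[OF assms(1,2), of VP v t] by simp
qed



lemma exp_reward:
  "measure_pmf.expectation (pear_state VP p v t) (pear_reward VP p v) =
     gumbel_emax [VP,VP] + (gumbel_emax [VP,v] - gumbel_emax [VP,VP]) * Pex VP p v t"
proof -
  let ?E = "{sf. pear_explore VP p (fst sf) (snd sf)}"
  have eq: "pear_reward VP p v = (\<lambda>sf. gumbel_emax [VP,VP] + (gumbel_emax [VP,v] - gumbel_emax [VP,VP]) * indicator ?E sf)"
    by (auto simp: pear_reward_def fun_eq_iff split: split_indicator)
  have int: "integrable (measure_pmf (pear_state VP p v t)) f" for f :: "_ \<Rightarrow> real"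
    using fin_supp by (rule integrable_measure_pmf_finite)
  show ?thesis unfolding eq Pex_def
    by (simp add: int)
qed

lemma exp_total:
  assumes "0 < p" "p < 1"
  shows "measure_pmf.expectation (bind_pmf (niche_pmf p) (\<lambda>v. map_pmf (\<lambda>sf. (v, sf)) (pear_state VP p v t)))
        (\<lambda>(v, sf). pear_reward VP p v sf) =
     p * measure_pmf.expectation (pear_state VP p (vgood p) t) (pear_reward VP p (vgood p))
     + (1 - p) * measure_pmf.expectation (pear_state VP p (-1) t) (pear_reward VP p (-1))"
proof -
  have "measure_pmf.expectation (bind_pmf (niche_pmf p) (\<lambda>v. map_pmf (\<lambda>sf. (v, sf)) (pear_state VP p v t)))
        (\<lambda>(v, sf). pear_reward VP p v sf) =
     (\<Sum>b\<in>UNIV. pmf (bernoulli_pmf p) b *\<^sub>R measure_pmf.expectation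
        ((\<lambda>b. map_pmf (\<lambda>sf. (if b then vgood p else -1, sf)) (pear_state VP p (if b then vgood p else -1) t)) b)
        (\<lambda>(v, sf). pear_reward VP p v sf))"
    unfolding niche_pmf_def bind_map_pmf
    by (rule pmf_expectation_bind) (auto simp: fin_supp)
  also have "\<dots> = p * measure_pmf.expectation (pear_state VP p (vgood p) t) (pear_reward VP p (vgood p))
     + (1 - p) * measure_pmf.expectation (pear_state VP p (-1) t) (pear_reward VP p (-1))"
    using assms by (simp add: UNIV_bool)
  finally show ?thesis .
qed



lemma ge2: "gumbel_emax [a, b] = ln (1 + exp a + exp b)"
  unfolding gumbel_emax_def by (simp add: add.assoc)

lemma lim_pR: "((\<lambda>p. p * ln (1 + exp VP + exp (vgood p))) \<longlongrightarrow> 1) (at_right 0)"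
  unfolding vgood_def by real_asymp

lemma lim_rho1: "((\<lambda>p. rho VP (vgood p)) \<longlongrightarrow> 1) (at_right 0)"
  unfolding vgood_def rho_def by real_asymp



lemma ev01: "\<forall>\<^sub>F p in at_right (0::real). 0 < p \<and> p < 1"
  by (simp add: eventually_at_right_field) (auto intro: exI[of _ 1])

lemma lim_PexG: "((\<lambda>p. Pex VP p (vgood p) t) \<longlongrightarrow> 1) (at_right 0)"
proof (rule tendsto_sandwich)
  show "\<forall>\<^sub>F p in at_right 0. rho VP (vgood p) ^ t \<le> Pex VP p (vgood p) t"
    using ev01 by eventually_elim (simp add: Pex_ge)
  show "\<forall>\<^sub>F p in at_right 0. Pex VP p (vgood p) t \<le> 1" by (simp add: Pex_le1)
  show "((\<lambda>p. rho VP (vgood p) ^ t) \<longlongrightarrow> 1) (at_right 0)"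
    using tendsto_power[OF lim_rho1, of VP t] by simp
qed simp

lemma good_term:
  "((\<lambda>p. p * (gumbel_emax [VP,VP] + (gumbel_emax [VP, vgood p] - gumbel_emax [VP,VP]) * Pex VP p (vgood p) t)) \<longlongrightarrow> 1) (at_right 0)"
proof -
  have eq: "p * (gumbel_emax [VP,VP] + (gumbel_emax [VP, vgood p] - gumbel_emax [VP,VP]) * Pex VP p (vgood p) t)
     = p * gumbel_emax [VP,VP] + (p * ln (1 + exp VP + exp (vgood p)) - p * gumbel_emax [VP,VP]) * Pex VP p (vgood p) t" for p
    by (simp add: ge2 algebra_simps)
  have p0: "((\<lambda>p::real. p) \<longlongrightarrow> 0) (at_right 0)" by (rule tendsto_ident_at)
  show ?thesis unfolding eq
    by (rule tendsto_eq_intros p0 lim_pR lim_PexG refl)+ simp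
qed

lemma ev_bad:
  "\<forall>\<^sub>F p in at_right 0. \<forall>S F. S + F \<le> t \<longrightarrow> F \<ge> 1 \<longrightarrow> \<not> pear_explore VP p S F"
proof -
  define r2 where "r2 = rho VP (-1)"
  define m where "m = min r2 (1 - r2)"
  have m: "0 < m" "m \<le> 1" unfolding m_def r2_def using rho_pos[of VP "-1"] rho_lt1[of VP "-1"] by auto
  have "((\<lambda>p. 1 - rho VP (vgood p)) \<longlongrightarrow> 0) (at_right 0)"
    using tendsto_diff[OF tendsto_const[of 1] lim_rho1[of VP]] by simp
  moreover have "m ^ t > 0" using m by simp
  ultimately have "\<forall>\<^sub>F p in at_right 0. 1 - rho VP (vgood p) < m ^ t"
    by (rule order_tendstoD)
  then show ?thesis using ev01
  proof eventually_elim
    case (elim p)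
    show ?case
    proof (intro allI impI)
      fix S F :: nat assume SF: "S + F \<le> t" "F \<ge> 1"
      define q where "q = rho VP (vgood p)"
      have q: "0 < q" "q < 1" unfolding q_def using rho_pos rho_lt1 by auto
      have "q ^ S * (1 - q) ^ F \<le> 1 * (1 - q)"
      proof (rule mult_mono)
        show "q ^ S \<le> 1" using q by (simp add: power_le_one)
        show "(1 - q) ^ F \<le> 1 - q" using q SF(2) by (simp add: power_le_imp_le_exp power_decreasing[of 1 F "1-q", simplified])
      qed (use q in auto)
      also have "\<dots> < m ^ t" using elim q_def by simp
      also have "m ^ t \<le> m ^ (S + F)" using m SF(1) by (simp add: power_decreasing)
      also have "\<dots> = m ^ S * m ^ F" by (simp add: power_add)
      also have "\<dots> \<le> r2 ^ S * (1 - r2) ^ F"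
        using m by (intro mult_mono power_mono) (auto simp: m_def)
      finally have "\<not> (r2 ^ S * (1 - r2) ^ F \<le> q ^ S * (1 - q) ^ F)" by simp
      then show "\<not> pear_explore VP p S F" using explore_iff[of p VP S F] elim unfolding r2_def q_def by simp
    qed
  qed
qed

lemma bad_term:
  "((\<lambda>p. (1 - p) * (gumbel_emax [VP,VP] + (gumbel_emax [VP, -1] - gumbel_emax [VP,VP]) * Pex VP p (-1) t))
     \<longlongrightarrow> gumbel_emax [VP,VP] + (gumbel_emax [VP, -1] - gumbel_emax [VP,VP]) * rho VP (-1) ^ t) (at_right 0)"
proof -
  have "\<forall>\<^sub>F p in at_right 0. (1 - p) * (gumbel_emax [VP,VP] + (gumbel_emax [VP, -1] - gumbel_emax [VP,VP]) * rho VP (-1) ^ t)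
     = (1 - p) * (gumbel_emax [VP,VP] + (gumbel_emax [VP, -1] - gumbel_emax [VP,VP]) * Pex VP p (-1) t)"
    using ev01 ev_bad[of t VP] by eventually_elim (simp add: Pex_eq)
  moreover have "((\<lambda>p. (1 - p) * (gumbel_emax [VP,VP] + (gumbel_emax [VP, -1] - gumbel_emax [VP,VP]) * rho VP (-1) ^ t))
     \<longlongrightarrow> gumbel_emax [VP,VP] + (gumbel_emax [VP, -1] - gumbel_emax [VP,VP]) * rho VP (-1) ^ t) (at_right 0)"
    by (rule tendsto_eq_intros tendsto_ident_at refl)+ simp
  ultimately show ?thesis by (blast intro: Lim_transform_eventually)
qed



lemma pR_bound:
  assumes "0 < p" "p < 1"
  shows "p * gumbel_emax [VP, vgood p] \<le> 1 + ln (2 + exp VP)"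
proof -
  have G: "vgood p \<ge> 0" using assms unfolding vgood_def by simp
  then have eG: "exp (vgood p) \<ge> 1" by simp
  have "1 + exp VP + exp (vgood p) \<le> (2 + exp VP) * exp (vgood p)"
    using eG by (simp add: algebra_simps) (smt (verit) eG exp_gt_zero mult_le_cancel_left1)
  then have "ln (1 + exp VP + exp (vgood p)) \<le> ln ((2 + exp VP) * exp (vgood p))"
    by (simp add: add_pos_pos)
  also have "\<dots> = ln (2 + exp VP) + vgood p"
  proof -
    have "2 + exp VP > 0" by (simp add: add_pos_pos)
    then show ?thesis by (simp add: ln_mult)
  qed
  finally have "p * ln (1 + exp VP + exp (vgood p)) \<le> p * (ln (2 + exp VP) + vgood p)"
    using assms by simp
  also have "\<dots> = p * ln (2 + exp VP) + (1 - p)" using assms unfolding vgood_def by (simp add: field_simps)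
  also have "\<dots> \<le> 1 + ln (2 + exp VP)"
  proof -
    have "ln (2 + exp VP) \<ge> 0" by (simp add: add_pos_pos)
    then have "p * ln (2 + exp VP) \<le> ln (2 + exp VP)" using assms by (simp add: mult_left_le_one_le)
    then show ?thesis using assms by simp
  qed
  finally show ?thesis by (simp add: ge2)
qed

lemma ge_nonneg: "gumbel_emax [a, b] \<ge> 0" unfolding ge2 by (simp add: add_pos_pos)

lemma conv_bnd:
  fixes a b x :: real
  assumes "0 \<le> x" "x \<le> 1" "0 \<le> a" "0 \<le> b"
  shows "0 \<le> b + (a - b) * x" "b + (a - b) * x \<le> a + b"
proof -
  have e: "b + (a - b) * x = b * (1 - x) + a * x" by (simp add: algebra_simps)
  show "0 \<le> b + (a - b) * x" unfolding e using assms by simp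
  have "b * (1 - x) \<le> b" "a * x \<le> a" using assms by (auto simp: mult_left_le)
  then show "b + (a - b) * x \<le> a + b" unfolding e by simp
qed

definition Cb where "Cb VP = 1 + ln (2 + exp VP) + 2 * gumbel_emax [VP,VP] + gumbel_emax [VP,-1]"

lemma term_bound:
  fixes VP p :: real and t :: nat
  assumes "0 < p" "p < 1"
  defines "X \<equiv> p * (gumbel_emax [VP,VP] + (gumbel_emax [VP, vgood p] - gumbel_emax [VP,VP]) * Pex VP p (vgood p) t)
     + (1 - p) * (gumbel_emax [VP,VP] + (gumbel_emax [VP, -1] - gumbel_emax [VP,VP]) * Pex VP p (-1) t)"
  shows "0 \<le> X" "X \<le> Cb VP"
proof -
  note g1 = conv_bnd[where x="Pex VP p (vgood p) t" and a="gumbel_emax [VP, vgood p]" and b="gumbel_emax [VP,VP]",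
     OF Pex_ge0 Pex_le1 ge_nonneg ge_nonneg]
  note g2 = conv_bnd[where x="Pex VP p (-1) t" and a="gumbel_emax [VP, -1]" and b="gumbel_emax [VP,VP]",
     OF Pex_ge0 Pex_le1 ge_nonneg ge_nonneg]
  show "0 \<le> X" unfolding X_def using g1 g2 assms by simp
  have "p * (gumbel_emax [VP,VP] + (gumbel_emax [VP, vgood p] - gumbel_emax [VP,VP]) * Pex VP p (vgood p) t)
     \<le> p * (gumbel_emax [VP, vgood p] + gumbel_emax [VP,VP])"
    using g1 assms by (intro mult_left_mono) auto
  also have "\<dots> \<le> 1 + ln (2 + exp VP) + gumbel_emax [VP,VP]"
  proof -
    have "p * gumbel_emax [VP,VP] \<le> gumbel_emax [VP,VP]"
      using ge_nonneg[of VP VP] assms(1,2) by (simp add: mult_left_le_one_le)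
    then show ?thesis using pR_bound[OF assms(1,2), of VP] by (simp add: distrib_left)
  qed
  finally have h1: "p * (gumbel_emax [VP,VP] + (gumbel_emax [VP, vgood p] - gumbel_emax [VP,VP]) * Pex VP p (vgood p) t)
     \<le> 1 + ln (2 + exp VP) + gumbel_emax [VP,VP]" .
  have "(1 - p) * (gumbel_emax [VP,VP] + (gumbel_emax [VP, -1] - gumbel_emax [VP,VP]) * Pex VP p (-1) t)
      \<le> gumbel_emax [VP,VP] + (gumbel_emax [VP, -1] - gumbel_emax [VP,VP]) * Pex VP p (-1) t"
    using g2 assms by (simp add: mult_left_le_one_le)
  with h1 g2 show "X \<le> Cb VP" unfolding X_def Cb_def by linarith
qed



lemma util_pear_lim:
  fixes \<delta> :: real
  assumes d: "0 \<le> \<delta>" "\<delta> < 1"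
  shows "((\<lambda>p. Util_PEAR VP p \<delta>) \<longlongrightarrow>
     (1 + gumbel_emax [VP,VP]) / (1 - \<delta>) + (gumbel_emax [VP,-1] - gumbel_emax [VP,VP]) / (1 - \<delta> * rho VP (-1))) (at_right 0)"
proof -
  define B0 where "B0 = gumbel_emax [VP,VP]"
  define A0 where "A0 = gumbel_emax [VP,-1]"
  define r2 where "r2 = rho VP (-1)"
  define a where "a k p = \<delta> ^ k * measure_pmf.expectation
        (bind_pmf (niche_pmf p) (\<lambda>v. map_pmf (\<lambda>sf. (v, sf)) (pear_state VP p v k)))
        (\<lambda>(v, sf). pear_reward VP p v sf)" for k p
  define b where "b k = \<delta> ^ k * (1 + (B0 + (A0 - B0) * r2 ^ k))" for k
  have aeq: "a k p = \<delta> ^ k * (p * (B0 + (gumbel_emax [VP, vgood p] - B0) * Pex VP p (vgood p) k)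
     + (1 - p) * (B0 + (A0 - B0) * Pex VP p (-1) k))" if "0 < p" "p < 1" for k p
    unfolding a_def using that by (simp add: exp_total exp_reward B0_def A0_def)
  have lim: "((\<lambda>p. a k p) \<longlongrightarrow> b k) (at_right 0)" for k
  proof -
    have "((\<lambda>p. \<delta> ^ k * (p * (B0 + (gumbel_emax [VP, vgood p] - B0) * Pex VP p (vgood p) k)
     + (1 - p) * (B0 + (A0 - B0) * Pex VP p (-1) k))) \<longlongrightarrow> b k) (at_right 0)"
      unfolding b_def B0_def A0_def r2_def
      by (intro tendsto_mult tendsto_add tendsto_const good_term bad_term)
    moreover have "\<forall>\<^sub>F p in at_right 0. \<delta> ^ k * (p * (B0 + (gumbel_emax [VP, vgood p] - B0) * Pex VP p (vgood p) k)
     + (1 - p) * (B0 + (A0 - B0) * Pex VP p (-1) k)) = a k p"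
      using ev01 by eventually_elim (simp add: aeq)
    ultimately show ?thesis by (blast intro: Lim_transform_eventually)
  qed
  have bnd0: "norm (a k p) \<le> \<delta> ^ k * Cb VP" if p: "0 < p" "p < 1" for k p
  proof -
    note tb = term_bound[OF p, of VP k]
    show ?thesis
      using p tb d unfolding aeq[OF p] B0_def A0_def
      by (simp add: abs_mult mult_left_mono)
  qed
  have bnd: "\<forall>\<^sub>F (k, p) in at_top \<times>\<^sub>F at_right 0. norm (a k p) \<le> \<delta> ^ k * Cb VP"
    unfolding eventually_prod_filter
    apply (rule exI[of _ "\<lambda>_. True"], rule exI[of _ "\<lambda>p. 0 < p \<and> p < 1"])
    using ev01 bnd0 by auto
  have summ: "summable (\<lambda>k. \<delta> ^ k * Cb VP)"
    using d by (intro summable_mult2 summable_geometric) simp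
  have T: "((\<lambda>p. suminf (\<lambda>k. a k p)) \<longlongrightarrow> suminf b) (at_right 0)"
    using tannerys_theorem[OF lim bnd summ] by simp
  have r2: "0 < r2" "r2 < 1" unfolding r2_def using rho_pos rho_lt1 by auto
  have dr: "norm (\<delta> * r2) < 1" using d r2
    by (simp add: abs_mult) (smt (verit) mult_less_cancel_left1 mult_nonneg_nonneg)
  have "b sums ((1 + B0) * (1 / (1 - \<delta>)) + (A0 - B0) * (1 / (1 - \<delta> * r2)))"
  proof -
    have "(\<lambda>k. (1 + B0) * \<delta> ^ k + (A0 - B0) * (\<delta> * r2) ^ k) sums ((1 + B0) * (1 / (1 - \<delta>)) + (A0 - B0) * (1 / (1 - \<delta> * r2)))"
      using d dr by (intro sums_add sums_mult geometric_sums) auto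
    moreover have "(\<lambda>k. (1 + B0) * \<delta> ^ k + (A0 - B0) * (\<delta> * r2) ^ k) = b"
      unfolding b_def by (auto simp: fun_eq_iff algebra_simps power_mult_distrib)
    ultimately show ?thesis by simp
  qed
  then have "suminf b = (1 + B0) / (1 - \<delta>) + (A0 - B0) / (1 - \<delta> * r2)"
    by (simp add: sums_iff)
  moreover have "Util_PEAR VP p \<delta> = suminf (\<lambda>k. a k p)" for p
    unfolding Util_PEAR_def a_def by simp
  ultimately show ?thesis using T unfolding B0_def A0_def r2_def by simp
qed

lemma util_app:
  fixes \<delta> :: real
  assumes d: "0 \<le> \<delta>" "\<delta> < 1"
  shows "Util_APP VP p \<delta> = gumbel_emax [VP,VP] / (1 - \<delta>)"
proof -
  have "(\<lambda>t. \<delta> ^ t * gumbel_emax [VP,VP]) sums (gumbel_emax [VP,VP] * (1 / (1 - \<delta>)))"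
    using d by (subst mult.commute) (intro sums_mult geometric_sums, simp)
  then show ?thesis unfolding Util_APP_def by (simp add: sums_iff)
qed



lemma exp_third: "exp (1/3::real) \<ge> 2713/1944"
proof -
  have s: "(\<lambda>n. (1/3::real) ^ n /\<^sub>R fact n) sums exp (1/3)" by (rule exp_converges)
  have "(\<Sum>n<5. (1/3::real) ^ n /\<^sub>R fact n) \<le> suminf (\<lambda>n. (1/3::real) ^ n /\<^sub>R fact n)"
    using s by (intro sum_le_suminf) (auto simp: sums_iff)
  also have "\<dots> = exp (1/3)" using s by (simp add: sums_iff)
  finally have "(\<Sum>n<5. (1/3::real) ^ n /\<^sub>R fact n) \<le> exp (1/3)" .
  moreover have "(\<Sum>n<5. (1/3::real) ^ n /\<^sub>R fact n) = 2713/1944"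
    by (simp add: numeral_eq_Suc fact_Suc lessThan_Suc)
  ultimately show ?thesis by simp
qed

lemma B0_le: 
  assumes "VP \<ge> 1/3"
  shows "gumbel_emax [VP,VP] \<le> VP + 1"
proof -
  define x where "x = exp (1/3::real)"
  define c :: real where "c = 2713/1944"
  have xc: "x \<ge> c" unfolding x_def c_def by (rule exp_third)
  have c0: "c > 0" unfolding c_def by simp
  have e1: "exp 1 = x ^ 3" unfolding x_def by (simp add: exp_of_nat_mult[symmetric])
  have "x ^ 3 \<ge> c ^ 3" using xc c0 by (intro power_mono) auto
  moreover have "c ^ 3 - 2 > 0" "c * (c ^ 3 - 2) \<ge> 1" unfolding c_def by (simp_all add: power3_eq_cube)
  ultimately have "x * (x ^ 3 - 2) \<ge> c * (c ^ 3 - 2)"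
    using xc c0 by (intro mult_mono) auto
  then have xe: "x * (exp 1 - 2) \<ge> 1" using \<open>c * (c ^ 3 - 2) \<ge> 1\<close> e1 by simp
  have "exp VP \<ge> x" unfolding x_def using assms by simp
  moreover have "exp 1 - 2 > (0::real)" using \<open>x ^ 3 \<ge> c ^ 3\<close> \<open>c ^ 3 - 2 > 0\<close> e1 by simp
  ultimately have "exp VP * (exp 1 - 2) \<ge> 1" using xe
    by (smt (verit) mult_right_mono)
  then have "1 + 2 * exp VP \<le> exp (VP + 1)" by (simp add: exp_add algebra_simps)
  then have "ln (1 + 2 * exp VP) \<le> VP + 1"
    by (metis exp_gt_zero add_pos_pos ln_exp ln_le_cancel_iff mult_pos_pos zero_less_one zero_less_numeral)
  then show ?thesis unfolding ge2 by (simp add: add.commute)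
qed



theorem mainTheorem6:
  fixes VP :: real
  assumes "VP \<ge> 1/3"
  shows "\<exists>g L. (\<forall>\<^sub>F \<delta> in at_left (1::real).
            ((\<lambda>p. (Util_PEAR VP p \<delta> - Util_APP VP p \<delta>) / Util_APP VP p \<delta>) \<longlongrightarrow> g \<delta>)
              (at_right 0))
          \<and> (g \<longlongrightarrow> L) (at_left 1)
          \<and> 1 / (VP + 1) \<le> L"
proof -
  define B0 where "B0 = gumbel_emax [VP,VP]"
  define A0 where "A0 = gumbel_emax [VP,-1]"
  define r2 where "r2 = rho VP (-1)"
  define U where "U \<delta> = (1 + B0) / (1 - \<delta>) + (A0 - B0) / (1 - \<delta> * r2)" for \<delta> :: real
  define g where "g \<delta> = (U \<delta> - B0 / (1 - \<delta>)) / (B0 / (1 - \<delta>))" for \<delta>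
  have B0: "B0 > 0" unfolding B0_def ge2 by (simp add: add_pos_pos)
  have r2: "0 < r2" "r2 < 1" unfolding r2_def using rho_pos rho_lt1 by auto
  have ev: "\<forall>\<^sub>F \<delta> in at_left (1::real). 0 < \<delta> \<and> \<delta> < 1"
    by (simp add: eventually_at_left_field) (auto intro: exI[of _ 0])
  have P1: "\<forall>\<^sub>F \<delta> in at_left (1::real).
            ((\<lambda>p. (Util_PEAR VP p \<delta> - Util_APP VP p \<delta>) / Util_APP VP p \<delta>) \<longlongrightarrow> g \<delta>) (at_right 0)"
    using ev
  proof eventually_elim
    case (elim \<delta>)
    then have d: "0 \<le> \<delta>" "\<delta> < 1" by auto
    have "B0 / (1 - \<delta>) \<noteq> 0" using B0 d by simp
    then show ?case unfolding util_app[OF d] g_def U_def B0_def[symmetric]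
      using util_pear_lim[OF d, of VP] unfolding B0_def A0_def r2_def
      by (intro tendsto_intros) auto
  qed
  have geq: "\<forall>\<^sub>F \<delta> in at_left (1::real). (1 + (A0 - B0) * (1 - \<delta>) / (1 - \<delta> * r2)) / B0 = g \<delta>"
    using ev
  proof eventually_elim
    case (elim \<delta>)
    have "\<delta> * r2 < 1" using elim r2 by (smt (verit) mult_less_cancel_left1)
    then have "1 - \<delta> * r2 \<noteq> 0" "1 - \<delta> \<noteq> 0" using elim by auto
    then have nz: "1 - \<delta> \<noteq> 0" by simp
    have aux: "\<And>d X B :: real. d \<noteq> 0 \<Longrightarrow> B \<noteq> 0 \<Longrightarrow> (1/d + X)/(B/d) = (1 + X*d)/B"
      by (simp add: field_simps)
    have "U \<delta> - B0 / (1 - \<delta>) = 1 / (1 - \<delta>) + (A0 - B0) / (1 - \<delta> * r2)"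
      unfolding U_def by (simp add: add_divide_distrib)
    then have "g \<delta> = (1 + (A0 - B0) / (1 - \<delta> * r2) * (1 - \<delta>)) / B0"
      unfolding g_def using aux[OF nz, of B0] B0 by simp
    then show ?case by simp
  qed
  have "((\<lambda>\<delta>. (1 + (A0 - B0) * (1 - \<delta>) / (1 - \<delta> * r2)) / B0) \<longlongrightarrow>
     (1 + (A0 - B0) * (1 - 1) / (1 - 1 * r2)) / B0) (at_left 1)"
    using r2 B0 by (intro tendsto_intros) auto
  then have "((\<lambda>\<delta>. (1 + (A0 - B0) * (1 - \<delta>) / (1 - \<delta> * r2)) / B0) \<longlongrightarrow> 1 / B0) (at_left 1)" by simp
  then have P2: "(g \<longlongrightarrow> 1 / B0) (at_left 1)" using geq by (rule Lim_transform_eventually)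
  have P3: "1 / (VP + 1) \<le> 1 / B0"
    using B0_le[OF assms] B0 unfolding B0_def by (simp add: frac_le)
  show ?thesis using P1 P2 P3 by blast
qed

end
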